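(* Assume: (A1) $f(x,y)$ and each component of $g(x,y)$ are convex in $y$ for each fixed $x$, and $f,g$ are twice continuously differentiable; (A2) $Y\subseteq\mathbb{R}^m$ is a compact convex set with $\{y:\exists x\in X \text{ such that } g(x,y)\le 0\}\subseteq\mathrm{int}(Y)$; (R1) for each $x\in X$ there exists $y$ with $g(x,y)<0$. Then for each fixed $(\lambda,x)$, the function $\mu\mapsto -h_\mu(\lambda,x)$ is decreasing on $\mu\ge0$, and the functions $-h_\mu$ epi-converge to $-h$ as $\mu\to0$ (with $\mu>0$).
   Context: Let $f:\mathbb{R}^n\times\mathbb{R}^m\to\mathbb{R}$, $g:\mathbb{R}^n\times\mathbb{R}^m\to\mathbb{R}^p$, $G:\mathbb{R}^n\to\mathbb{R}^q$; vector inequalities componentwise; $X=\{x:G(x)\le0\}$. $h(\lambda,x)=\min_y\{f(x,y)+\lambda^{\mathsf T}g(x,y):y\in Y\}$ and, for $\mu\ge0$, $h_\mu(\lambda,x)=\min_y\{\mu\|y\|^2+f(x,y)+\lambda^{\mathsf T}g(x,y):y\in Y\}$ (so $h_0=h$), with $Y$ from (A2). Functions $\phi_\mu$ epi-converge to $\phi$ as $\mu\to0$ if their epigraphs converge to the epigraph of $\phi$ in the Painlevé–Kuratowski sense; equivalently, for every $z$, $\liminf\phi_\mu(z^\mu)\ge\phi(z)$ for all $z^\mu\to z$, and $\limsup\phi_\mu(z^\mu)\le\phi(z)$ for some $z^\mu\to z$. *)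

theory Defs
  imports "HOL-Analysis.Analysis"
begin

definition twice_cont_diff :: "('a::euclidean_space \<Rightarrow> 'b::real_normed_vector) \<Rightarrow> bool" where
  "twice_cont_diff F \<longleftrightarrow>
     (\<exists>F' F''. (\<forall>z. (F has_derivative blinfun_apply (F' z)) (at z)) \<and>
               (\<forall>z. (F' has_derivative blinfun_apply (F'' z)) (at z)) \<and>
               continuous_on UNIV F'')"

definition hfun :: "'m set \<Rightarrow> ('n \<Rightarrow> 'm \<Rightarrow> real) \<Rightarrow> ('n \<Rightarrow> 'm \<Rightarrow> real^'p)
                     \<Rightarrow> real^'p \<Rightarrow> 'n \<Rightarrow> real" where
  "hfun Y f g lam x = Inf ((\<lambda>y. f x y + lam \<bullet> g x y) ` Y)"

definition hmu :: "('m::real_normed_vector) set \<Rightarrow> ('n \<Rightarrow> 'm \<Rightarrow> real) \<Rightarrow> ('n \<Rightarrow> 'm \<Rightarrow> real^'p)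
                    \<Rightarrow> real \<Rightarrow> real^'p \<Rightarrow> 'n \<Rightarrow> real" where
  "hmu Y f g \<mu> lam x = Inf ((\<lambda>y. \<mu> * (norm y)\<^sup>2 + f x y + lam \<bullet> g x y) ` Y)"

text \<open>Epi-convergence of phi_mu to psi as mu -> 0 (mu > 0), via the sequential characterization.\<close>
definition epi_converges :: "(real \<Rightarrow> 'a::topological_space \<Rightarrow> real) \<Rightarrow> ('a \<Rightarrow> real) \<Rightarrow> bool" where
  "epi_converges \<phi> \<psi> \<longleftrightarrow>
     (\<forall>z. (\<forall>zz. (zz \<longlongrightarrow> z) (at_right 0) \<longrightarrow>
              Liminf (at_right 0) (\<lambda>\<mu>. ereal (\<phi> \<mu> (zz \<mu>))) \<ge> ereal (\<psi> z)) \<and>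
          (\<exists>zz. (zz \<longlongrightarrow> z) (at_right 0) \<and>
              Limsup (at_right 0) (\<lambda>\<mu>. ereal (\<phi> \<mu> (zz \<mu>))) \<le> ereal (\<psi> z)))"

end

theory Submission
  imports Defs
begin

lemma tcd_cont:
  fixes F :: "('a::euclidean_space) \<Rightarrow> 'b::real_normed_vector"
  assumes "twice_cont_diff F"
  shows "isCont F z"
proof -
  from assms obtain F' where "\<forall>z. (F has_derivative blinfun_apply (F' z)) (at z)"
    unfolding twice_cont_diff_def by blast
  then show ?thesis using has_derivative_continuous by blast
qed

lemma tendsto2:
  fixes f :: "'a::euclidean_space \<Rightarrow> 'b::euclidean_space \<Rightarrow> 'c::real_normed_vector"
  assumes "\<And>z. isCont (\<lambda>(x, y). f x y) z"
    and "(a \<longlongrightarrow> a0) F" and "(b \<longlongrightarrow> b0) F"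
  shows "((\<lambda>t. f (a t) (b t)) \<longlongrightarrow> f a0 b0) F"
proof -
  have "((\<lambda>t. (a t, b t)) \<longlongrightarrow> (a0, b0)) F" using assms(2,3) by (rule tendsto_Pair)
  from isCont_tendsto_compose[OF assms(1) this] show ?thesis by simp
qed

lemma cont2:
  fixes f :: "'a::euclidean_space \<Rightarrow> 'b::euclidean_space \<Rightarrow> 'c::real_normed_vector"
  assumes "\<And>z. isCont (\<lambda>(x, y). f x y) z"
    and "continuous_on S a" and "continuous_on S b"
  shows "continuous_on S (\<lambda>t. f (a t) (b t))"
proof -
  have "continuous_on S (\<lambda>t. (a t, b t))" using assms(2,3) by (intro continuous_intros)
  moreover have "continuous_on UNIV (\<lambda>(x, y). f x y)"
    using assms(1) by (simp add: continuous_at_imp_continuous_on)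
  ultimately have "continuous_on S ((\<lambda>(x, y). f x y) \<circ> (\<lambda>t. (a t, b t)))"
    by (intro continuous_on_compose) (auto intro: continuous_on_subset)
  then show ?thesis by (simp add: o_def)
qed

theorem proposition2:
  fixes f :: "real^'n \<Rightarrow> real^'m \<Rightarrow> real"
    and g :: "real^'n \<Rightarrow> real^'m \<Rightarrow> real^'p"
    and G :: "real^'n \<Rightarrow> real^'q"
    and X :: "(real^'n) set" and Y :: "(real^'m) set"
  assumes X_def: "X = {x. \<forall>j. G x $ j \<le> 0}"
    and A1_f_convex: "\<And>x. convex_on UNIV (f x)"
    and A1_g_convex: "\<And>x i. convex_on UNIV (\<lambda>y. g x y $ i)"
    and A1_f_C2: "twice_cont_diff (\<lambda>(x, y). f x y)"
    and A1_g_C2: "twice_cont_diff (\<lambda>(x, y). g x y)"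
    and A2_compact: "compact Y"
    and A2_convex: "convex Y"
    and A2_int: "{y. \<exists>x\<in>X. \<forall>i. g x y $ i \<le> 0} \<subseteq> interior Y"
    and R1: "\<And>x. x \<in> X \<Longrightarrow> \<exists>y. \<forall>i. g x y $ i < 0"
  shows "(\<forall>lam x. \<forall>\<mu>1 \<mu>2. 0 \<le> \<mu>1 \<longrightarrow> \<mu>1 \<le> \<mu>2 \<longrightarrow>
            - hmu Y f g \<mu>2 lam x \<le> - hmu Y f g \<mu>1 lam x)
       \<and> epi_converges (\<lambda>\<mu> (lam, x). - hmu Y f g \<mu> lam x) (\<lambda>(lam, x). - hfun Y f g lam x)"
proof -
  have cf: "\<And>z. isCont (\<lambda>(x, y). f x y) z" using tcd_cont[OF A1_f_C2] .
  have cg: "\<And>z. isCont (\<lambda>(x, y). g x y) z" using tcd_cont[OF A1_g_C2] .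
  define H where "H = (\<lambda>\<mu> (lam::real^'p) x (y::real^'m). \<mu> * (norm y)\<^sup>2 + f x y + lam \<bullet> g x y)"
  have hmu_eq: "hmu Y f g \<mu> lam x = Inf (H \<mu> lam x ` Y)" for \<mu> lam x
    unfolding hmu_def H_def by simp
  have hfun_eq: "hfun Y f g lam x = Inf (H 0 lam x ` Y)" for lam x
    unfolding hfun_def H_def by simp
  have contH: "continuous_on Y (H \<mu> lam x)" for \<mu> lam x
    unfolding H_def
    by (intro continuous_intros cont2[OF cf] cont2[OF cg])
  have bdd: "bdd_below (H \<mu> lam x ` Y)" for \<mu> lam x
    by (intro bounded_imp_bdd_below compact_imp_bounded compact_continuous_image contH A2_compact)
  have mono: "hmu Y f g \<mu>1 lam x \<le> hmu Y f g \<mu>2 lam x" if "\<mu>1 \<le> \<mu>2" for \<mu>1 \<mu>2 lam x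
  proof (cases "Y = {}")
    case True then show ?thesis by (simp add: hmu_def)
  next
    case False
    show ?thesis unfolding hmu_eq
    proof (rule cInf_mono)
      show "H \<mu>2 lam x ` Y \<noteq> {}" using False by simp
      show "bdd_below (H \<mu>1 lam x ` Y)" by (rule bdd)
      fix b assume "b \<in> H \<mu>2 lam x ` Y"
      then obtain y where y: "y \<in> Y" "b = H \<mu>2 lam x y" by auto
      have "\<mu>1 * (norm y)\<^sup>2 \<le> \<mu>2 * (norm y)\<^sup>2" using that by (simp add: mult_right_mono)
      then have "H \<mu>1 lam x y \<le> b" using y by (simp add: H_def)
      then show "\<exists>a\<in>H \<mu>1 lam x ` Y. a \<le> b" using y by auto
    qed
  qed
  have part1: "\<forall>lam x. \<forall>\<mu>1 \<mu>2. 0 \<le> \<mu>1 \<longrightarrow> \<mu>1 \<le> \<mu>2 \<longrightarrow>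
            - hmu Y f g \<mu>2 lam x \<le> - hmu Y f g \<mu>1 lam x"
    using mono by simp
  have ntriv: "\<not> trivial_limit (at_right (0::real))" by simp
  have part2: "epi_converges (\<lambda>\<mu> (lam, x). - hmu Y f g \<mu> lam x) (\<lambda>(lam, x). - hfun Y f g lam x)"
    unfolding epi_converges_def
  proof (intro allI conjI impI)
    fix z :: "(real^'p) \<times> (real^'n)" and zz :: "real \<Rightarrow> (real^'p) \<times> (real^'n)"
    assume zz: "(zz \<longlongrightarrow> z) (at_right 0)"
    obtain lam x where z: "z = (lam, x)" by fastforce
    show "ereal ((\<lambda>(lam, x). - hfun Y f g lam x) z)
          \<le> Liminf (at_right 0) (\<lambda>\<mu>. ereal ((\<lambda>\<mu> (lam, x). - hmu Y f g \<mu> lam x) \<mu> (zz \<mu>)))"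
    proof (cases "Y = {}")
      case True
      then show ?thesis using z ntriv
        by (simp add: hmu_def hfun_def split_beta Liminf_const)
    next
      case False
      obtain ys where ys: "ys \<in> Y" "\<forall>y\<in>Y. H 0 lam x ys \<le> H 0 lam x y"
        using continuous_attains_inf[OF A2_compact False contH] by blast
      have hz: "hfun Y f g lam x = H 0 lam x ys"
        unfolding hfun_eq using ys by (intro cInf_eq_minimum) auto
      have ev: "eventually (\<lambda>\<mu>. ereal (- H \<mu> (fst (zz \<mu>)) (snd (zz \<mu>)) ys)
           \<le> ereal ((\<lambda>\<mu> (lam, x). - hmu Y f g \<mu> lam x) \<mu> (zz \<mu>))) (at_right 0)"
      proof (intro always_eventually allI)
        fix \<mu>
        have "hmu Y f g \<mu> (fst (zz \<mu>)) (snd (zz \<mu>)) \<le> H \<mu> (fst (zz \<mu>)) (snd (zz \<mu>)) ys"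
          unfolding hmu_eq using ys bdd by (intro cInf_lower) auto
        then show "ereal (- H \<mu> (fst (zz \<mu>)) (snd (zz \<mu>)) ys)
           \<le> ereal ((\<lambda>\<mu> (lam, x). - hmu Y f g \<mu> lam x) \<mu> (zz \<mu>))"
          by (simp add: split_beta)
      qed
      have lim: "((\<lambda>\<mu>. H \<mu> (fst (zz \<mu>)) (snd (zz \<mu>)) ys) \<longlongrightarrow> H 0 lam x ys) (at_right 0)"
      proof -
        have l1: "((\<lambda>\<mu>. fst (zz \<mu>)) \<longlongrightarrow> lam) (at_right 0)"
          using tendsto_fst[OF zz] z by simp
        have l2: "((\<lambda>\<mu>. snd (zz \<mu>)) \<longlongrightarrow> x) (at_right 0)"
          using tendsto_snd[OF zz] z by simp
        have l0: "((\<lambda>\<mu>::real. \<mu>) \<longlongrightarrow> 0) (at_right 0)"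
          by (simp add: tendsto_ident_at)
        show ?thesis unfolding H_def
          using l0 l1 l2
          by (intro tendsto_intros tendsto2[OF cf] tendsto2[OF cg]) (auto simp: tendsto_ident_at)
      qed
      then have "((\<lambda>\<mu>. ereal (- H \<mu> (fst (zz \<mu>)) (snd (zz \<mu>)) ys)) \<longlongrightarrow> ereal (- H 0 lam x ys)) (at_right 0)"
        by (intro tendsto_intros)
      then have "Liminf (at_right 0) (\<lambda>\<mu>. ereal (- H \<mu> (fst (zz \<mu>)) (snd (zz \<mu>)) ys)) = ereal (- H 0 lam x ys)"
        using ntriv by (intro lim_imp_Liminf)
      then have "ereal (- H 0 lam x ys) \<le> Liminf (at_right 0) (\<lambda>\<mu>. ereal ((\<lambda>\<mu> (lam, x). - hmu Y f g \<mu> lam x) \<mu> (zz \<mu>)))"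
        using Liminf_mono[OF ev] by simp
      then show ?thesis using z hz by simp
    qed
  next
    fix z :: "(real^'p) \<times> (real^'n)"
    obtain lam x where z: "z = (lam, x)" by fastforce
    show "\<exists>zz. (zz \<longlongrightarrow> z) (at_right 0) \<and>
           Limsup (at_right 0) (\<lambda>\<mu>. ereal ((\<lambda>\<mu> (lam, x). - hmu Y f g \<mu> lam x) \<mu> (zz \<mu>)))
           \<le> ereal ((\<lambda>(lam, x). - hfun Y f g lam x) z)"
    proof (intro exI conjI)
      show "((\<lambda>_. z) \<longlongrightarrow> z) (at_right 0)" by simp
      have "hmu Y f g 0 lam x = hfun Y f g lam x" by (simp add: hmu_eq hfun_eq)
      have ev: "eventually (\<lambda>\<mu>. ereal ((\<lambda>\<mu> (lam, x). - hmu Y f g \<mu> lam x) \<mu> z)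
             \<le> ereal (- hfun Y f g lam x)) (at_right (0::real))"
      proof (intro eventually_mono[OF eventually_at_right_less[of 0]] )
        fix \<mu> :: real assume "0 < \<mu>"
        then have "hmu Y f g 0 lam x \<le> hmu Y f g \<mu> lam x" by (intro mono) simp
        then show "ereal ((\<lambda>\<mu> (lam, x). - hmu Y f g \<mu> lam x) \<mu> z) \<le> ereal (- hfun Y f g lam x)"
          using z by (simp add: hmu_eq hfun_eq)
      qed
      have "Limsup (at_right (0::real)) (\<lambda>_. ereal (- hfun Y f g lam x)) = ereal (- hfun Y f g lam x)"
        using ntriv by (intro lim_imp_Limsup) auto
      then show "Limsup (at_right 0) (\<lambda>\<mu>. ereal ((\<lambda>\<mu> (lam, x). - hmu Y f g \<mu> lam x) \<mu> ((\<lambda>_. z) \<mu>)))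
           \<le> ereal ((\<lambda>(lam, x). - hfun Y f g lam x) z)"
        using Limsup_mono[OF ev] z by simp
    qed
  qed
  show ?thesis using part1 part2 by blast
qed

end
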